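(* Let $(x_k)$ be a bounded sequence in a real Banach space $X$, let $x\in X$ and $c>0$, and suppose that $(x_k-x)$ generates an $\ell_1$-spreading model with some constant strictly greater than $c$. Then there is $n\in\mathbb N$ such that $\operatorname{asep}((x_{k^2})_{k\ge n})>2c$.
   Context: A bounded sequence $(y_k)$ generates an $\ell_1$-spreading model with constant $\delta>0$ if $\|\sum_{i\in F}\alpha_i y_i\|\ge\delta\sum_{i\in F}|\alpha_i|$ for every finite $F\subset\mathbb N$ with $\#F\le\min F$ and all real $(\alpha_i)_{i\in F}$. For a bounded sequence $(z_j)_{j\ge1}$, $\operatorname{asep}(z_j)=\inf\{\|\frac1{\#F}(\sum_{j\in F}z_j-\sum_{j\in H}z_j)\|: F,H\subset\mathbb N\text{ finite nonempty},\ \#F=\#H,\ \max F<\min H\}$; here it is applied to the sequence $j\mapsto x_{(n+j-1)^2}$, $j\ge1$. *)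

theory Defs
  imports "HOL-Analysis.Analysis"
begin

text \<open>Natural numbers are read as positive integers (indices start at 1).
  A bounded sequence y generates an l1-spreading model with constant delta.\<close>
definition ell1_spreading_model :: "(nat \<Rightarrow> 'a::real_normed_vector) \<Rightarrow> real \<Rightarrow> bool" where
  "ell1_spreading_model y \<delta> \<longleftrightarrow>
     bounded (range y) \<and>
     (\<forall>F (\<alpha>::nat \<Rightarrow> real). finite F \<and> F \<noteq> {} \<and> card F \<le> Min F \<longrightarrow>
        \<delta> * (\<Sum>i\<in>F. \<bar>\<alpha> i\<bar>) \<le> norm (\<Sum>i\<in>F. \<alpha> i *\<^sub>R y i))"

definition asep :: "(nat \<Rightarrow> 'a::real_normed_vector) \<Rightarrow> real" where
  "asep z = Inf {norm ((1 / real (card F)) *\<^sub>R ((\<Sum>j\<in>F. z j) - (\<Sum>j\<in>H. z j))) | F H.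
      finite F \<and> finite H \<and> F \<noteq> {} \<and> H \<noteq> {} \<and> F \<subseteq> {1..} \<and> H \<subseteq> {1..} \<and>
      card F = card H \<and> Max F < Min H}"

end

theory Submission
  imports Defs
begin

lemma key:
  fixes y :: "nat \<Rightarrow> 'a::real_normed_vector"
  assumes sp: "ell1_spreading_model y \<delta>" and d0: "\<delta> \<ge> 0" and M: "\<forall>k. norm (y k) \<le> M"
    and I: "finite I" and inj: "inj_on \<phi> I" and cardI: "card I \<le> T"
    and b: "\<forall>i\<in>I. \<bar>\<beta> i\<bar> \<le> b"
  shows "\<delta> * (\<Sum>i\<in>I. \<bar>\<beta> i\<bar>) - (\<delta> + M) * (b * card {i\<in>I. \<phi> i < T})
           \<le> norm (\<Sum>i\<in>I. \<beta> i *\<^sub>R y (\<phi> i))"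
proof -
  define S where "S = {i\<in>I. T \<le> \<phi> i}"
  define D where "D = {i\<in>I. \<phi> i < T}"
  have M0: "M \<ge> 0" using M norm_ge_zero order_trans by metis
  have fS: "finite S" and fD: "finite D" using I by (auto simp: S_def D_def)
  have un: "I = S \<union> D" and dj: "S \<inter> D = {}" by (auto simp: S_def D_def)
  have sumI1: "(\<Sum>i\<in>I. \<beta> i *\<^sub>R y (\<phi> i)) = (\<Sum>i\<in>S. \<beta> i *\<^sub>R y (\<phi> i)) + (\<Sum>i\<in>D. \<beta> i *\<^sub>R y (\<phi> i))"
    using sum.union_disjoint[OF fS fD dj] un by simp
  have sumI2: "(\<Sum>i\<in>I. \<bar>\<beta> i\<bar>) = (\<Sum>i\<in>S. \<bar>\<beta> i\<bar>) + (\<Sum>i\<in>D. \<bar>\<beta> i\<bar>)"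
    using sum.union_disjoint[OF fS fD dj] un by simp
  have hS: "\<delta> * (\<Sum>i\<in>S. \<bar>\<beta> i\<bar>) \<le> norm (\<Sum>i\<in>S. \<beta> i *\<^sub>R y (\<phi> i))"
  proof (cases "S = {}")
    case True then show ?thesis by simp
  next
    case False
    define \<alpha> where "\<alpha> g = \<beta> (inv_into I \<phi> g)" for g
    have injS: "inj_on \<phi> S" using inj by (rule inj_on_subset) (auto simp: S_def)
    have c1: "card (\<phi> ` S) = card S" using injS card_image by blast
    have c2: "card S \<le> card I" using I un card_mono by blast
    have c3: "T \<le> Min (\<phi> ` S)" using fS False by (auto simp: S_def Min_ge_iff)
    have "\<delta> * (\<Sum>g\<in>\<phi> ` S. \<bar>\<alpha> g\<bar>) \<le> norm (\<Sum>g\<in>\<phi> ` S. \<alpha> g *\<^sub>R y g)"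
    proof -
      have all: "\<And>F (\<alpha>::nat \<Rightarrow> real). finite F \<and> F \<noteq> {} \<and> card F \<le> Min F \<Longrightarrow>
        \<delta> * (\<Sum>i\<in>F. \<bar>\<alpha> i\<bar>) \<le> norm (\<Sum>i\<in>F. \<alpha> i *\<^sub>R y i)"
        using sp unfolding ell1_spreading_model_def by blast
      have "card (\<phi> ` S) \<le> Min (\<phi> ` S)" using c1 c2 c3 cardI by linarith
      moreover have "finite (\<phi> ` S)" "\<phi> ` S \<noteq> {}" using fS False by auto
      ultimately show ?thesis using all[of "\<phi> ` S" \<alpha>] by blast
    qed
    moreover have "(\<Sum>g\<in>\<phi> ` S. \<bar>\<alpha> g\<bar>) = (\<Sum>i\<in>S. \<bar>\<beta> i\<bar>)"
    proof -
      have "(\<Sum>g\<in>\<phi> ` S. \<bar>\<alpha> g\<bar>) = (\<Sum>i\<in>S. \<bar>\<alpha> (\<phi> i)\<bar>)" by (simp add: sum.reindex[OF injS])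
      also have "\<dots> = (\<Sum>i\<in>S. \<bar>\<beta> i\<bar>)"
        by (rule sum.cong) (auto simp: \<alpha>_def S_def inv_into_f_f[OF inj])
      finally show ?thesis .
    qed
    moreover have "(\<Sum>g\<in>\<phi> ` S. \<alpha> g *\<^sub>R y g) = (\<Sum>i\<in>S. \<beta> i *\<^sub>R y (\<phi> i))"
    proof -
      have "(\<Sum>g\<in>\<phi> ` S. \<alpha> g *\<^sub>R y g) = (\<Sum>i\<in>S. \<alpha> (\<phi> i) *\<^sub>R y (\<phi> i))" by (simp add: sum.reindex[OF injS])
      also have "\<dots> = (\<Sum>i\<in>S. \<beta> i *\<^sub>R y (\<phi> i))"
        by (rule sum.cong) (auto simp: \<alpha>_def S_def inv_into_f_f[OF inj])
      finally show ?thesis .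
    qed
    ultimately show ?thesis by simp
  qed
  have hD: "norm (\<Sum>i\<in>D. \<beta> i *\<^sub>R y (\<phi> i)) \<le> M * (\<Sum>i\<in>D. \<bar>\<beta> i\<bar>)"
  proof -
    have "norm (\<Sum>i\<in>D. \<beta> i *\<^sub>R y (\<phi> i)) \<le> (\<Sum>i\<in>D. norm (\<beta> i *\<^sub>R y (\<phi> i)))"
      by (rule norm_sum)
    also have "\<dots> \<le> (\<Sum>i\<in>D. M * \<bar>\<beta> i\<bar>)"
    proof (rule sum_mono)
      fix i assume "i \<in> D"
      have "\<bar>\<beta> i\<bar> * norm (y (\<phi> i)) \<le> \<bar>\<beta> i\<bar> * M" using M by (intro mult_left_mono) auto
      then show "norm (\<beta> i *\<^sub>R y (\<phi> i)) \<le> M * \<bar>\<beta> i\<bar>" by (simp add: mult.commute)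
    qed
    finally show ?thesis by (simp add: sum_distrib_left)
  qed
  have hb: "(\<Sum>i\<in>D. \<bar>\<beta> i\<bar>) \<le> b * card D"
    using sum_bounded_above[of D "\<lambda>i. \<bar>\<beta> i\<bar>" b] b by (auto simp: D_def mult.commute)
  have tri: "norm (\<Sum>i\<in>S. \<beta> i *\<^sub>R y (\<phi> i)) - norm (\<Sum>i\<in>D. \<beta> i *\<^sub>R y (\<phi> i))
      \<le> norm (\<Sum>i\<in>I. \<beta> i *\<^sub>R y (\<phi> i))"
    unfolding sumI1 by (rule norm_diff_ineq)
  have "(\<delta> + M) * (\<Sum>i\<in>D. \<bar>\<beta> i\<bar>) \<le> (\<delta> + M) * (b * card D)"
    using hb d0 M0 by (intro mult_left_mono) auto
  then show ?thesis using hS hD tri sumI2 unfolding D_def[symmetric]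
    by (simp add: algebra_simps)
qed


lemma cardD_bound:
  fixes n m :: nat and I :: "nat set"
  assumes "finite I" "I \<subseteq> {1..}" "n \<ge> 1"
  shows "card {j\<in>I. (n + j - 1)^2 < 2*m} * n < 2*m \<or> m = 0"
proof (cases "{j\<in>I. (n + j - 1)^2 < 2*m} = {}")
  case True then show ?thesis unfolding True by auto
next
  case False
  define D where "D = {j\<in>I. (n + j - 1)^2 < 2*m}"
  have fD: "finite D" using assms(1) by (simp add: D_def)
  define j0 where "j0 = Max D"
  have j0D: "j0 \<in> D" unfolding j0_def by (rule Max_in[OF fD]) (use False in \<open>simp add: D_def\<close>)
  have "D \<subseteq> {1..j0}" using assms(2) fD j0_def by (auto simp: D_def)
  hence "card D \<le> j0" by (metis card_atLeastAtMost card_mono finite_atLeastAtMost diff_Suc_1)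
  hence "card D * n \<le> j0 * n" by simp
  also have "j0 * n \<le> (n + j0 - 1) * (n + j0 - 1)"
    using assms(2,3) j0D by (intro mult_le_mono) (auto simp: D_def)
  also have "\<dots> < 2*m" using j0D by (simp add: D_def power2_eq_square)
  finally show ?thesis by (simp add: D_def)
qed

theorem lemma4p6:
  fixes x :: "nat \<Rightarrow> 'a::banach" and x0 :: 'a and c :: real
  assumes "bounded (range x)"
    and "c > 0"
    and "\<exists>\<delta>>c. ell1_spreading_model (\<lambda>k. x k - x0) \<delta>"
  shows "\<exists>n\<ge>1. asep (\<lambda>j. x ((n + j - 1)^2)) > 2 * c"
proof -
  define y where "y = (\<lambda>k. x k - x0)"
  obtain \<delta> where dc: "\<delta> > c" and sp: "ell1_spreading_model y \<delta>" using assms(3) y_def by blast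
  have "bounded (range y)" using sp unfolding ell1_spreading_model_def by blast
  then obtain M where M: "\<forall>k. norm (y k) \<le> M" unfolding bounded_iff by blast
  have M0: "M \<ge> 0" using M norm_ge_zero order_trans by metis
  have d0: "\<delta> \<ge> 0" using dc assms(2) by linarith
  define n where "n = nat \<lceil>2*(\<delta>+M)/(\<delta>-c)\<rceil> + 1"
  have n1: "n \<ge> 1" by (simp add: n_def)
  have "2*(\<delta>+M)/(\<delta>-c) \<le> real n" unfolding n_def by linarith
  hence hn: "2*(\<delta>+M) \<le> (\<delta>-c) * real n" using dc by (simp add: field_simps)
  define \<phi> where "\<phi> j = (n + j - 1)^2" for j
  have injphi: "inj_on \<phi> {1..}"
  proof (rule inj_onI)
    fix a b assume "a \<in> {1..}" "b \<in> {1..}" "\<phi> a = \<phi> b"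
    hence "n + a - 1 = n + b - 1" by (simp add: \<phi>_def power2_eq_iff)
    thus "a = b" using n1 by simp
  qed
  have bound: "\<delta> + c \<le> norm ((1 / real (card F)) *\<^sub>R ((\<Sum>j\<in>F. x (\<phi> j)) - (\<Sum>j\<in>H. x (\<phi> j))))"
    if F: "finite F" "F \<noteq> {}" "F \<subseteq> {1..}" and H: "finite H" "H \<noteq> {}" "H \<subseteq> {1..}"
      and cFH: "card F = card H" and FH: "Max F < Min H" for F H
  proof -
    define m where "m = card F"
    have m1: "m \<ge> 1" using F by (simp add: m_def Suc_le_eq card_gt_0_iff)
    have dj: "F \<inter> H = {}"
    proof (rule ccontr)
      assume "F \<inter> H \<noteq> {}" then obtain a where "a \<in> F" "a \<in> H" by blast
      hence "a \<le> Max F" "Min H \<le> a" using F H by auto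
      thus False using FH by linarith
    qed
    define I where "I = F \<union> H"
    have fI: "finite I" using F H by (simp add: I_def)
    have cI: "card I = 2*m" using card_Un_disjoint[OF F(1) H(1) dj] cFH by (simp add: I_def m_def)
    have injI: "inj_on \<phi> I" using injphi by (rule inj_on_subset) (use F H in \<open>auto simp: I_def\<close>)
    define \<beta> where "\<beta> j = (if j \<in> F then 1 / real m else - 1 / real m)" for j
    have sx: "(\<Sum>j\<in>K. x (\<phi> j)) = (\<Sum>j\<in>K. y (\<phi> j)) + real (card K) *\<^sub>R x0" for K
    proof -
      have "(\<Sum>j\<in>K. y (\<phi> j)) = (\<Sum>j\<in>K. x (\<phi> j)) - real (card K) *\<^sub>R x0"
        by (simp add: y_def sum_subtractf sum_constant_scaleR)
      thus ?thesis by simp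
    qed
    have vec: "(1 / real (card F)) *\<^sub>R ((\<Sum>j\<in>F. x (\<phi> j)) - (\<Sum>j\<in>H. x (\<phi> j)))
        = (\<Sum>j\<in>I. \<beta> j *\<^sub>R y (\<phi> j))"
    proof -
      have "(\<Sum>j\<in>I. \<beta> j *\<^sub>R y (\<phi> j)) = (\<Sum>j\<in>F. \<beta> j *\<^sub>R y (\<phi> j)) + (\<Sum>j\<in>H. \<beta> j *\<^sub>R y (\<phi> j))"
        unfolding I_def by (rule sum.union_disjoint[OF F(1) H(1) dj])
      also have "(\<Sum>j\<in>F. \<beta> j *\<^sub>R y (\<phi> j)) = (\<Sum>j\<in>F. (1 / real m) *\<^sub>R y (\<phi> j))"
        by (rule sum.cong) (auto simp: \<beta>_def)
      also have "(\<Sum>j\<in>H. \<beta> j *\<^sub>R y (\<phi> j)) = (\<Sum>j\<in>H. (- 1 / real m) *\<^sub>R y (\<phi> j))"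
        by (rule sum.cong) (use dj in \<open>auto simp: \<beta>_def\<close>)
      finally show ?thesis
        by (simp add: sx cFH[symmetric] m_def scaleR_sum_right[symmetric] scaleR_diff_right sum_negf)
    qed
    have b: "\<forall>i\<in>I. \<bar>\<beta> i\<bar> \<le> 1 / real m" by (simp add: \<beta>_def)
    have K: "\<delta> * (\<Sum>i\<in>I. \<bar>\<beta> i\<bar>) - (\<delta> + M) * ((1 / real m) * card {i\<in>I. \<phi> i < 2*m})
           \<le> norm (\<Sum>i\<in>I. \<beta> i *\<^sub>R y (\<phi> i))"
      by (rule key[OF sp d0 M fI injI]) (use cI b in auto)
    have sb: "(\<Sum>i\<in>I. \<bar>\<beta> i\<bar>) = 2"
    proof -
      have "(\<Sum>i\<in>I. \<bar>\<beta> i\<bar>) = (\<Sum>i\<in>I. 1 / real m)" by (rule sum.cong) (auto simp: \<beta>_def)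
      also have "\<dots> = 2" using cI m1 by simp
      finally show ?thesis .
    qed
    define d where "d = card {i\<in>I. \<phi> i < 2*m}"
    have dn: "d * n < 2*m" using cardD_bound[OF fI _ n1, of m] F H m1
      unfolding d_def \<phi>_def I_def by auto
    hence "real d * real n \<le> 2 * real m" by (metis of_nat_mult of_nat_numeral of_nat_le_iff less_imp_le)
    hence "(\<delta>+M) * (real d * real n) \<le> (\<delta>+M) * (2 * real m)" using d0 M0 by (intro mult_left_mono) auto
    also have "\<dots> = 2*(\<delta>+M) * real m" by simp
    also have "\<dots> \<le> (\<delta>-c) * real n * real m" using hn m1 by (intro mult_right_mono) auto
    finally have "((\<delta>+M) * real d) * real n \<le> ((\<delta>-c) * real m) * real n" by (simp add: algebra_simps)
    hence "(\<delta>+M) * real d \<le> (\<delta>-c) * real m" using n1 by simp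
    hence "(\<delta>+M) * ((1 / real m) * real d) \<le> \<delta>-c" using m1 by (simp add: field_simps)
    moreover have "\<delta> * 2 - (\<delta> + M) * ((1 / real m) * real d) \<le> norm (\<Sum>i\<in>I. \<beta> i *\<^sub>R y (\<phi> i))"
      using K unfolding sb d_def by simp
    ultimately show ?thesis unfolding vec by linarith
  qed
  have "\<delta> + c \<le> asep (\<lambda>j. x ((n + j - 1)^2))"
    unfolding asep_def
  proof (rule cInf_greatest)
    let ?F = "{1::nat}" and ?H = "{2::nat}"
    show "{norm ((1 / real (card F)) *\<^sub>R ((\<Sum>j\<in>F. x ((n + j - 1)\<^sup>2)) - (\<Sum>j\<in>H. x ((n + j - 1)\<^sup>2)))) |F H.
      finite F \<and> finite H \<and> F \<noteq> {} \<and> H \<noteq> {} \<and> F \<subseteq> {1..} \<and> H \<subseteq> {1..} \<and> card F = card H \<and> Max F < Min H} \<noteq> {}"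
      by (rule ex_in_conv[THEN iffD1], rule exI, rule CollectI, rule exI[of _ ?F], rule exI[of _ ?H], rule conjI, rule refl) simp
  next
    fix v assume "v \<in> {norm ((1 / real (card F)) *\<^sub>R ((\<Sum>j\<in>F. x ((n + j - 1)\<^sup>2)) - (\<Sum>j\<in>H. x ((n + j - 1)\<^sup>2)))) |F H.
      finite F \<and> finite H \<and> F \<noteq> {} \<and> H \<noteq> {} \<and> F \<subseteq> {1..} \<and> H \<subseteq> {1..} \<and> card F = card H \<and> Max F < Min H}"
    then obtain F H where "finite F" "finite H" "F \<noteq> {}" "H \<noteq> {}" "F \<subseteq> {1..}" "H \<subseteq> {1..}"
      "card F = card H" "Max F < Min H"
      and v: "v = norm ((1 / real (card F)) *\<^sub>R ((\<Sum>j\<in>F. x ((n + j - 1)\<^sup>2)) - (\<Sum>j\<in>H. x ((n + j - 1)\<^sup>2))))"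
      by blast
    then show "\<delta> + c \<le> v" using bound[of F H] unfolding \<phi>_def by simp
  qed
  then show ?thesis using n1 dc by (intro exI[of _ n]) auto
qed

end
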